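(* Let $G=(V,E)$ be a graph that is strongly reconstructible in $\mathbb{C}^d$, and suppose that a pair of vertices $u,v\in V$ is globally linked in $G$ in $\mathbb{C}^d$. Then $G'=G+uv$ is strongly reconstructible in $\mathbb{C}^d$. Moreover, if $G$ is fully reconstructible in $\mathbb{C}^d$, then so is $G'$.
   Context: $G+uv$ denotes the graph obtained from $G$ by adding the edge $uv$. For $p:V\to\mathbb{C}^d$, $m_{uv}(p)=\sum_{k=1}^d(p(u)_k-p(v)_k)^2$ (defined for any vertex pair); a framework is generic if its coordinates are algebraically independent over $\mathbb{Q}$; $(G,p),(G,q)$ are equivalent if $m_{e}(p)=m_e(q)$ for all edges $e$; $(G,p),(H,q)$ are length-equivalent under a bijection $\psi:E(G)\to E(H)$ if $m_e(p)=m_{\psi(e)}(q)$ for all $e\in E(G)$. A pair $\{u,v\}$ is globally linked in $G$ in $\mathbb{C}^d$ if for every generic $(G,p)$ in $\mathbb{C}^d$ and every equivalent $(G,q)$ in $\mathbb{C}^d$, $m_{uv}(p)=m_{uv}(q)$. A generic $(G,p)$ in $\mathbb{C}^d$ is strongly reconstructible if for every graph $H$ with the same number of vertices as $G$ and every generic $(H,q)$ in $\mathbb{C}^d$ length-equivalent to $(G,p)$ under some $\psi$, there is an isomorphism $\varphi:V(G)\to V(H)$ with $\psi(xy)=\varphi(x)\varphi(y)$ for all $xy\in E(G)$. Fully reconstructible is defined the same way for $G$ without isolated vertices, but with $H$ ranging over all graphs without isolated vertices (any number of vertices). A graph is strongly (fully) reconstructible in $\mathbb{C}^d$ if all its generic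 realizations in $\mathbb{C}^d$ are. *)

theory Defs
  imports Complex_Main "HOL-Library.Poly_Mapping"
begin

definition graph :: "'a set \<Rightarrow> 'a set set \<Rightarrow> bool" where
  "graph V E \<longleftrightarrow> finite V \<and> (\<forall>e\<in>E. \<exists>x y. x \<noteq> y \<and> x \<in> V \<and> y \<in> V \<and> e = {x, y})"

definition no_isolated :: "'a set \<Rightarrow> 'a set set \<Rightarrow> bool" where
  "no_isolated V E \<longleftrightarrow> (\<forall>x\<in>V. \<exists>e\<in>E. x \<in> e)"

text \<open>Realizations in C^d: p v k is the k-th coordinate (k < d) of vertex v.\<close>
definition m :: "nat \<Rightarrow> ('a \<Rightarrow> nat \<Rightarrow> complex) \<Rightarrow> 'a \<Rightarrow> 'a \<Rightarrow> complex" where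
  "m d p x y = (\<Sum>k<d. (p x k - p y k)^2)"

text \<open>Algebraic independence over Q of a family x indexed by I, via multivariate
  polynomials with rational coefficients (finitely supported maps from monomials).\<close>
definition mono_eval :: "('i \<Rightarrow>\<^sub>0 nat) \<Rightarrow> ('i \<Rightarrow> complex) \<Rightarrow> complex" where
  "mono_eval mn x = (\<Prod>i\<in>Poly_Mapping.keys mn. x i ^ Poly_Mapping.lookup mn i)"

definition poly_eval :: "(('i \<Rightarrow>\<^sub>0 nat) \<Rightarrow>\<^sub>0 rat) \<Rightarrow> ('i \<Rightarrow> complex) \<Rightarrow> complex" where
  "poly_eval P x = (\<Sum>mn\<in>Poly_Mapping.keys P. of_rat (Poly_Mapping.lookup P mn) * mono_eval mn x)"

definition alg_indep_Q :: "('i \<Rightarrow> complex) \<Rightarrow> 'i set \<Rightarrow> bool" where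
  "alg_indep_Q x I \<longleftrightarrow>
     (\<forall>P :: ('i \<Rightarrow>\<^sub>0 nat) \<Rightarrow>\<^sub>0 rat. (\<forall>mn\<in>Poly_Mapping.keys P. Poly_Mapping.keys mn \<subseteq> I) \<longrightarrow> poly_eval P x = 0 \<longrightarrow> P = 0)"

definition generic :: "nat \<Rightarrow> 'a set \<Rightarrow> ('a \<Rightarrow> nat \<Rightarrow> complex) \<Rightarrow> bool" where
  "generic d V p \<longleftrightarrow> alg_indep_Q (\<lambda>(v, k). p v k) (V \<times> {..<d})"

definition equivalent :: "nat \<Rightarrow> 'a set set \<Rightarrow> ('a \<Rightarrow> nat \<Rightarrow> complex) \<Rightarrow> ('a \<Rightarrow> nat \<Rightarrow> complex) \<Rightarrow> bool" where
  "equivalent d E p q \<longleftrightarrow> (\<forall>x y. {x, y} \<in> E \<longrightarrow> m d p x y = m d q x y)"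

definition globally_linked :: "nat \<Rightarrow> 'a set \<Rightarrow> 'a set set \<Rightarrow> 'a \<Rightarrow> 'a \<Rightarrow> bool" where
  "globally_linked d V E u v \<longleftrightarrow>
     (\<forall>p q. generic d V p \<longrightarrow> equivalent d E p q \<longrightarrow> m d p u v = m d q u v)"

definition length_equiv ::
  "nat \<Rightarrow> 'a set set \<Rightarrow> ('a \<Rightarrow> nat \<Rightarrow> complex) \<Rightarrow> 'b set set \<Rightarrow> ('b \<Rightarrow> nat \<Rightarrow> complex)
     \<Rightarrow> ('a set \<Rightarrow> 'b set) \<Rightarrow> bool" where
  "length_equiv d E p EH q \<psi> \<longleftrightarrow> bij_betw \<psi> E EH \<and>
     (\<forall>x y a b. {x, y} \<in> E \<longrightarrow> \<psi> {x, y} = {a, b} \<longrightarrow> m d p x y = m d q a b)"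

definition induces :: "'a set \<Rightarrow> 'a set set \<Rightarrow> 'b set \<Rightarrow> 'b set set \<Rightarrow> ('a set \<Rightarrow> 'b set) \<Rightarrow> bool" where
  "induces V E VH EH \<psi> \<longleftrightarrow> (\<exists>\<phi>. bij_betw \<phi> V VH \<and>
     (\<forall>x\<in>V. \<forall>y\<in>V. {x, y} \<in> E \<longleftrightarrow> {\<phi> x, \<phi> y} \<in> EH) \<and>
     (\<forall>x y. {x, y} \<in> E \<longrightarrow> \<psi> {x, y} = {\<phi> x, \<phi> y}))"

text \<open>Graphs H are taken with vertex type nat (every finite graph is isomorphic to one).\<close>
definition strongly_reconstructible_fw :: "nat \<Rightarrow> 'a set \<Rightarrow> 'a set set \<Rightarrow> ('a \<Rightarrow> nat \<Rightarrow> complex) \<Rightarrow> bool" where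
  "strongly_reconstructible_fw d V E p \<longleftrightarrow>
     (\<forall>(VH :: nat set) EH q \<psi>. graph VH EH \<longrightarrow> card VH = card V \<longrightarrow> generic d VH q \<longrightarrow>
        length_equiv d E p EH q \<psi> \<longrightarrow> induces V E VH EH \<psi>)"

definition fully_reconstructible_fw :: "nat \<Rightarrow> 'a set \<Rightarrow> 'a set set \<Rightarrow> ('a \<Rightarrow> nat \<Rightarrow> complex) \<Rightarrow> bool" where
  "fully_reconstructible_fw d V E p \<longleftrightarrow>
     (\<forall>(VH :: nat set) EH q \<psi>. graph VH EH \<longrightarrow> no_isolated VH EH \<longrightarrow> generic d VH q \<longrightarrow>
        length_equiv d E p EH q \<psi> \<longrightarrow> induces V E VH EH \<psi>)"

definition strongly_reconstructible :: "nat \<Rightarrow> 'a set \<Rightarrow> 'a set set \<Rightarrow> bool" where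
  "strongly_reconstructible d V E \<longleftrightarrow>
     (\<forall>p. generic d V p \<longrightarrow> strongly_reconstructible_fw d V E p)"

definition fully_reconstructible :: "nat \<Rightarrow> 'a set \<Rightarrow> 'a set set \<Rightarrow> bool" where
  "fully_reconstructible d V E \<longleftrightarrow> no_isolated V E \<and>
     (\<forall>p. generic d V p \<longrightarrow> fully_reconstructible_fw d V E p)"

end

theory Submission imports Defs begin

lemma mono_eval_superset:
  assumes "finite S" "Poly_Mapping.keys mn \<subseteq> S"
  shows "mono_eval mn x = (\<Prod>i\<in>S. x i ^ Poly_Mapping.lookup mn i)"
  unfolding mono_eval_def
  by (rule prod.mono_neutral_left) (auto simp: assms in_keys_iff)

lemma poly_eval_superset:
  assumes "finite S" "Poly_Mapping.keys P \<subseteq> S"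
  shows "poly_eval P x = (\<Sum>mn\<in>S. of_rat (Poly_Mapping.lookup P mn) * mono_eval mn x)"
  unfolding poly_eval_def
  by (rule sum.mono_neutral_left) (auto simp: assms in_keys_iff)

lemma poly_eval_add: "poly_eval (P + Q) x = poly_eval P x + poly_eval Q x"
proof -
  let ?S = "Poly_Mapping.keys P \<union> Poly_Mapping.keys Q"
  have "poly_eval (P + Q) x = (\<Sum>mn\<in>?S. of_rat (Poly_Mapping.lookup (P+Q) mn) * mono_eval mn x)"
    by (rule poly_eval_superset) (auto dest: keys_add[THEN subsetD])
  also have "\<dots> = (\<Sum>mn\<in>?S. of_rat (Poly_Mapping.lookup P mn) * mono_eval mn x)
     + (\<Sum>mn\<in>?S. of_rat (Poly_Mapping.lookup Q mn) * mono_eval mn x)"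
    by (simp add: lookup_add of_rat_add distrib_right sum.distrib)
  also have "\<dots> = poly_eval P x + poly_eval Q x"
    by (simp add: poly_eval_superset[symmetric])
  finally show ?thesis .
qed

lemma poly_eval_zero: "poly_eval 0 x = 0"
  by (simp add: poly_eval_def)

lemma poly_eval_single: "poly_eval (Poly_Mapping.single mn c) x = of_rat c * mono_eval mn x"
  by (subst poly_eval_superset[of "{mn}"]) auto

lemma poly_eval_sum: "poly_eval (\<Sum>k\<in>K. f k) x = (\<Sum>k\<in>K. poly_eval (f k) x)"
  by (induction K rule: infinite_finite_induct) (auto simp: poly_eval_zero poly_eval_add)

lemma mono_eval_sq: "mono_eval (Poly_Mapping.single i (2::nat)) x = x i ^ 2"
  by (subst mono_eval_superset[of "{i}"]) auto

lemma mono_eval_pr: assumes "i \<noteq> j"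
  shows "mono_eval (Poly_Mapping.single i (1::nat) + Poly_Mapping.single j 1) x = x i * x j"
  using assms
  by (subst mono_eval_superset[of "{i,j}"]) (auto dest: keys_add[THEN subsetD] simp: lookup_add lookup_single)


lemma keys_add_sub: "Poly_Mapping.keys A \<subseteq> X \<Longrightarrow> Poly_Mapping.keys B \<subseteq> Y \<Longrightarrow> Poly_Mapping.keys (A + B) \<subseteq> X \<union> Y"
  using keys_add[of A B] by blast

lemma keys_single_sub: "Poly_Mapping.keys (Poly_Mapping.single mn c) \<subseteq> {mn}"
  by simp

lemma m_sym: "m d p x y = m d p y x"
  unfolding m_def by (simp add: power2_commute)

lemma generic_D:
  assumes "generic d VH q" "\<forall>mn\<in>Poly_Mapping.keys P. Poly_Mapping.keys mn \<subseteq> VH \<times> {..<d}"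
    "poly_eval P (\<lambda>(v, k). q v k) = 0"
  shows "P = 0"
  using assms unfolding generic_def alg_indep_Q_def by simp

lemma generic_sub: assumes "generic d VH q" "VH0 \<subseteq> VH" shows "generic d VH0 q"
  unfolding generic_def alg_indep_Q_def
proof (intro allI impI)
  fix P :: "(('a \<times> nat) \<Rightarrow>\<^sub>0 nat) \<Rightarrow>\<^sub>0 rat"
  assume h1: "\<forall>mn\<in>Poly_Mapping.keys P. Poly_Mapping.keys mn \<subseteq> VH0 \<times> {..<d}"
    and h2: "poly_eval P (\<lambda>(v, k). q v k) = 0"
  have "\<forall>mn\<in>Poly_Mapping.keys P. Poly_Mapping.keys mn \<subseteq> VH \<times> {..<d}"
    using h1 assms(2) by auto
  then show "P = 0" using generic_D[OF assms(1) _ h2] by simp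
qed

lemma generic_pairs_aux:
  fixes q :: "'a \<Rightarrow> nat \<Rightarrow> complex"
  assumes d: "d \<ge> 1" and g: "generic d VH q"
    and in_: "a \<in> VH" "b \<in> VH" "c \<in> VH" "e \<in> VH"
    and ne: "a \<noteq> b" "c \<noteq> e" "a \<noteq> c" "a \<noteq> e"
    and meq: "m d q a b = m d q c e"
  shows False
proof -
  define sq :: "'a \<times> nat \<Rightarrow> ('a \<times> nat) \<Rightarrow>\<^sub>0 nat" where "sq i = Poly_Mapping.single i (2::nat)" for i
  define pr :: "'a \<times> nat \<Rightarrow> 'a \<times> nat \<Rightarrow> ('a \<times> nat) \<Rightarrow>\<^sub>0 nat"
    where "pr i j = Poly_Mapping.single i (1::nat) + Poly_Mapping.single j 1" for i j
  define T :: "nat \<Rightarrow> (('a \<times> nat) \<Rightarrow>\<^sub>0 nat) \<Rightarrow>\<^sub>0 rat" where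
    "T k = Poly_Mapping.single (sq (a,k)) 1 + Poly_Mapping.single (pr (a,k) (b,k)) (-2)
      + Poly_Mapping.single (sq (b,k)) 1 + Poly_Mapping.single (sq (c,k)) (-1)
      + Poly_Mapping.single (pr (c,k) (e,k)) 2 + Poly_Mapping.single (sq (e,k)) (-1)" for k
  define P where "P = (\<Sum>k<d. T k)"
  have pe: "mono_eval (pr i j) x = x i * x j" if "i \<noteq> j" for i j x
    unfolding pr_def using mono_eval_pr[OF that] .
  have evalT: "poly_eval (T k) x = (x(a,k) - x(b,k))^2 - (x(c,k)-x(e,k))^2" for x k
  proof -
    have "poly_eval (T k) x = x(a,k)^2 - 2 * (x(a,k) * x(b,k)) + x(b,k)^2 - x(c,k)^2
       + 2 * (x(c,k) * x(e,k)) - x(e,k)^2"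
    proof -
      have sqe: "mono_eval (sq i) x = x i ^ 2" for i unfolding sq_def by (rule mono_eval_sq)
      have "poly_eval (T k) x = of_rat 1 * mono_eval (sq (a,k)) x + of_rat (-2) * mono_eval (pr (a,k) (b,k)) x
        + of_rat 1 * mono_eval (sq (b,k)) x + of_rat (-1) * mono_eval (sq (c,k)) x
        + of_rat 2 * mono_eval (pr (c,k) (e,k)) x + of_rat (-1) * mono_eval (sq (e,k)) x"
        unfolding T_def poly_eval_add poly_eval_single by (rule refl)
      also have "\<dots> = x(a,k)^2 - 2 * (x(a,k) * x(b,k)) + x(b,k)^2 - x(c,k)^2
       + 2 * (x(c,k) * x(e,k)) - x(e,k)^2"
        using ne by (simp only: sqe pe prod.inject simp_thms) (simp add: of_rat_minus)
      finally show ?thesis .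
    qed
    then show ?thesis by (simp add: power2_diff)
  qed
  have eval: "poly_eval P x = (\<Sum>k<d. (x(a,k) - x(b,k))^2 - (x(c,k)-x(e,k))^2)" for x
    unfolding P_def poly_eval_sum evalT ..
  have keysT: "Poly_Mapping.keys (T k) \<subseteq> {sq (a,k)} \<union> {pr (a,k) (b,k)} \<union> {sq (b,k)} \<union> {sq (c,k)} \<union> {pr (c,k) (e,k)} \<union> {sq (e,k)}" for k
    unfolding T_def by (intro keys_add_sub keys_single_sub)
  have keys_sq: "Poly_Mapping.keys (sq i) = {i}" for i by (simp add: sq_def)
  have keys_pr: "Poly_Mapping.keys (pr i j) \<subseteq> {i, j}" for i j
    unfolding pr_def by (auto dest!: keys_add[THEN subsetD])
  have keysP: "\<forall>mn\<in>Poly_Mapping.keys P. Poly_Mapping.keys mn \<subseteq> VH \<times> {..<d}"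
  proof
    fix mn assume "mn \<in> Poly_Mapping.keys P"
    then obtain k where k: "k < d" "mn \<in> Poly_Mapping.keys (T k)"
      unfolding P_def using keys_sum[of T "{..<d}"] by auto
    then show "Poly_Mapping.keys mn \<subseteq> VH \<times> {..<d}"
      using keysT[of k] keys_sq keys_pr[of "(a,k)" "(b,k)"] keys_pr[of "(c,k)" "(e,k)"] in_
      by auto
  qed
  have "poly_eval P (\<lambda>(v, k). q v k) = m d q a b - m d q c e"
    unfolding eval m_def by (simp add: sum_subtractf)
  then have "poly_eval P (\<lambda>(v, k). q v k) = 0" using meq by simp
  with g keysP have P0: "P = 0" by (intro generic_D) auto
  define y :: "'a \<times> nat \<Rightarrow> complex" where "y z = (if z = (a, 0) then 1 else 0)" for z
  have "poly_eval P y = (\<Sum>k<d. if k = 0 then 1 else 0)"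
    unfolding eval y_def using ne by (intro sum.cong) auto
  also have "\<dots> = 1" using d by (simp add: sum.delta)
  finally have "poly_eval 0 y = (1::complex)" using P0 by simp
  then show False by (simp add: poly_eval_zero)
qed

lemma generic_pairs:
  fixes q :: "'a \<Rightarrow> nat \<Rightarrow> complex"
  assumes d: "d \<ge> 1" and g: "generic d VH q"
    and in_: "a \<in> VH" "b \<in> VH" "c \<in> VH" "e \<in> VH"
    and ne: "a \<noteq> b" "c \<noteq> e"
    and meq: "m d q a b = m d q c e"
  shows "{a, b} = {c, e}"
proof (rule ccontr)
  assume H: "{a, b} \<noteq> {c, e}"
  show False
  proof (cases "a \<in> {c, e}")
    case False
    then show ?thesis using generic_pairs_aux[OF d g in_ ne] meq by auto
  next
    case True
    then have "b \<notin> {c, e}" using H ne by auto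
    then show ?thesis using generic_pairs_aux[OF d g in_(2,1,3,4)] ne meq m_sym[of d q a b] by auto
  qed
qed


lemma doubleton_inj:
  assumes "inj_on f V" "x \<in> V" "y \<in> V" "u \<in> V" "v \<in> V"
  shows "({f x, f y} = {f u, f v}) = ({x, y} = {u, v})"
  using assms by (auto simp: doubleton_eq_iff dest: inj_onD)

lemma le_restrict:
  assumes le: "length_equiv d (E \<union> {{u, v}}) p EH' q \<psi>" and nE: "{u, v} \<notin> E"
  shows "length_equiv d E p (EH' - {\<psi> {u, v}}) q \<psi>"
proof -
  have b: "bij_betw \<psi> (E \<union> {{u, v}}) EH'" using le unfolding length_equiv_def by simp
  then have inj: "inj_on \<psi> (E \<union> {{u, v}})" and im: "\<psi> ` (E \<union> {{u, v}}) = EH'"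
    unfolding bij_betw_def by auto
  have "\<psi> ` E = EH' - {\<psi> {u, v}}"
  proof
    show "\<psi> ` E \<subseteq> EH' - {\<psi> {u, v}}"
    proof
      fix z assume "z \<in> \<psi> ` E"
      then obtain e where e: "e \<in> E" "z = \<psi> e" by auto
      have "\<psi> e \<noteq> \<psi> {u, v}" using inj e(1) nE unfolding inj_on_def by blast
      then show "z \<in> EH' - {\<psi> {u, v}}" using im e by auto
    qed
    show "EH' - {\<psi> {u, v}} \<subseteq> \<psi> ` E" using im by auto
  qed
  moreover have "inj_on \<psi> E" using inj by (rule inj_on_subset) auto
  ultimately have "bij_betw \<psi> E (EH' - {\<psi> {u, v}})" unfolding bij_betw_def by simp
  then show ?thesis using le unfolding length_equiv_def by auto
qed


lemma finish:
  fixes V :: "'a set" and E :: "'a set set" and VH VH0 :: "nat set"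
  assumes d: "d \<ge> 1" and uV: "u \<in> V" and vV: "v \<in> V" and uv: "u \<noteq> v" and nE: "{u, v} \<notin> E"
    and gl: "globally_linked d V E u v" and gp: "generic d V p" and gq: "generic d VH q"
    and gH: "graph VH EH'" and le: "length_equiv d (E \<union> {{u, v}}) p EH' q \<psi>"
    and sub: "VH0 \<subseteq> VH" and ind: "induces V E VH0 (EH' - {\<psi> {u, v}}) \<psi>"
  shows "induces V (E \<union> {{u, v}}) VH0 EH' \<psi> \<and> \<psi> {u, v} \<subseteq> VH0"
proof -
  obtain \<phi> where bij: "bij_betw \<phi> V VH0"
    and iff: "\<forall>x\<in>V. \<forall>y\<in>V. {x, y} \<in> E \<longleftrightarrow> {\<phi> x, \<phi> y} \<in> EH' - {\<psi> {u, v}}"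
    and eq: "\<forall>x y. {x, y} \<in> E \<longrightarrow> \<psi> {x, y} = {\<phi> x, \<phi> y}"
    using ind unfolding induces_def by blast
  have injp: "inj_on \<phi> V" using bij bij_betw_def by blast
  have bpsi: "bij_betw \<psi> (E \<union> {{u, v}}) EH'" using conjunct1[OF le[unfolded length_equiv_def]] .
  have e0: "\<psi> {u, v} \<in> EH'" by (rule bij_betw_apply[OF bpsi]) simp
  have "\<exists>x y. x \<noteq> y \<and> x \<in> VH \<and> y \<in> VH \<and> \<psi> {u, v} = {x, y}"
    using gH[unfolded graph_def] e0 by blast
  then obtain a b where ab: "a \<noteq> b" "a \<in> VH" "b \<in> VH" "\<psi> {u, v} = {a, b}"
    by blast
  have lem: "\<forall>x y a b. {x, y} \<in> E \<union> {{u, v}} \<longrightarrow> \<psi> {x, y} = {a, b} \<longrightarrow> m d p x y = m d q a b"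
    using conjunct2[OF le[unfolded length_equiv_def]] .
  have m1: "m d p u v = m d q a b" using lem[rule_format, of u v a b] ab(4) by simp
  define q' where "q' x k = q (\<phi> x) k" for x k
  have "equivalent d E p q'"
    unfolding equivalent_def
  proof (intro allI impI)
    fix x y assume xy: "{x, y} \<in> E"
    then have "m d p x y = m d q (\<phi> x) (\<phi> y)" using lem[rule_format, of x y "\<phi> x" "\<phi> y"] eq[rule_format, OF xy] by simp
    then show "m d p x y = m d q' x y" by (simp add: m_def q'_def)
  qed
  then have "m d p u v = m d q' u v" using gl[unfolded globally_linked_def, rule_format, OF gp] by blast
  then have m2: "m d q a b = m d q (\<phi> u) (\<phi> v)" using m1 by (simp add: m_def q'_def)
  have puv: "\<phi> u \<in> VH0" "\<phi> v \<in> VH0" using bij_betw_apply[OF bij uV] bij_betw_apply[OF bij vV] .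
  have ne: "\<phi> u \<noteq> \<phi> v"
  proof
    assume "\<phi> u = \<phi> v"
    then have "u = v" by (rule inj_onD[OF injp _ uV vV])
    with uv show False ..
  qed
  have abe: "{a, b} = {\<phi> u, \<phi> v}"
    using generic_pairs[OF d gq ab(2,3) subsetD[OF sub puv(1)] subsetD[OF sub puv(2)] ab(1) ne m2] .
  have e0': "\<psi> {u, v} = {\<phi> u, \<phi> v}" using ab(4) abe by simp
  have "induces V (E \<union> {{u, v}}) VH0 EH' \<psi>"
    unfolding induces_def
  proof (intro exI conjI ballI allI impI)
    show "bij_betw \<phi> V VH0" by (rule bij)
  next
    fix x y assume x: "x \<in> V" and y: "y \<in> V"
    have "({\<phi> x, \<phi> y} = {\<phi> u, \<phi> v}) = ({x, y} = {u, v})"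
      using doubleton_inj[OF injp x y uV vV] .
    then show "({x, y} \<in> E \<union> {{u, v}}) = ({\<phi> x, \<phi> y} \<in> EH')"
      using iff[rule_format, OF x y] e0 e0' by auto
  next
    fix x y assume "{x, y} \<in> E \<union> {{u, v}}"
    then consider "{x, y} \<in> E" | "{x, y} = {u, v}" by blast
    then show "\<psi> {x, y} = {\<phi> x, \<phi> y}"
    proof cases
      case 1 then show ?thesis using eq by blast
    next
      case 2 then have "(x = u \<and> y = v) \<or> (x = v \<and> y = u)" by (simp add: doubleton_eq_iff)
      then show ?thesis
      proof
        assume "x = u \<and> y = v" then show ?thesis using e0' by simp
      next
        assume "x = v \<and> y = u" then show ?thesis using e0' by (simp add: insert_commute)
      qed
    qed
  qed
  then show ?thesis using e0' puv by simp
qed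


theorem lemma4p10:
  fixes V :: "'a set" and E :: "'a set set" and u v :: 'a and d :: nat
  assumes "d \<ge> 1"
    and "graph V E"
    and "u \<in> V" and "v \<in> V" and "u \<noteq> v"
    and "strongly_reconstructible d V E"
    and "globally_linked d V E u v"
  shows "strongly_reconstructible d V (E \<union> {{u, v}}) \<and>
         (fully_reconstructible d V E \<longrightarrow> fully_reconstructible d V (E \<union> {{u, v}}))"
proof (cases "{u, v} \<in> E")
  case True
  then have "E \<union> {{u, v}} = E" by blast
  then show ?thesis using assms(6) by simp
next
  case nE: False
  have S: "strongly_reconstructible d V (E \<union> {{u, v}})"
    unfolding strongly_reconstructible_def strongly_reconstructible_fw_def
  proof (intro allI impI)
    fix p and VH :: "nat set" and EH' q \<psi>
    assume gp: "generic d V p" and gH: "graph VH EH'" and cd: "card VH = card V"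
      and gq: "generic d VH q" and le: "length_equiv d (E \<union> {{u, v}}) p EH' q \<psi>"
    have gH0: "graph VH (EH' - {\<psi> {u, v}})" using gH unfolding graph_def by blast
    have le0: "length_equiv d E p (EH' - {\<psi> {u, v}}) q \<psi>" by (rule le_restrict[OF le nE])
    have "strongly_reconstructible_fw d V E p" using assms(6) gp
      unfolding strongly_reconstructible_def by blast
    then have ind: "induces V E VH (EH' - {\<psi> {u, v}}) \<psi>"
      unfolding strongly_reconstructible_fw_def using gH0 cd gq le0 by blast
    show "induces V (E \<union> {{u, v}}) VH EH' \<psi>"
      using finish[OF assms(1,3,4,5) nE assms(7) gp gq gH le subset_refl ind] by blast
  qed
  have F: "fully_reconstructible d V (E \<union> {{u, v}})" if fr: "fully_reconstructible d V E"
  proof -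
    have ni: "no_isolated V E" using fr unfolding fully_reconstructible_def by blast
    have ni': "no_isolated V (E \<union> {{u, v}})" using ni unfolding no_isolated_def by blast
    have "fully_reconstructible_fw d V (E \<union> {{u, v}}) p" if gp: "generic d V p" for p
      unfolding fully_reconstructible_fw_def
    proof (intro allI impI)
      fix VH :: "nat set" and EH' q \<psi>
      assume gH: "graph VH EH'" and niH: "no_isolated VH EH'"
        and gq: "generic d VH q" and le: "length_equiv d (E \<union> {{u, v}}) p EH' q \<psi>"
      define EH where "EH = EH' - {\<psi> {u, v}}"
      define VH0 where "VH0 = {x \<in> VH. \<exists>e\<in>EH. x \<in> e}"
      have sub: "VH0 \<subseteq> VH" unfolding VH0_def by blast
      have finH: "finite VH" using gH unfolding graph_def by blast
      have gH0: "graph VH0 EH"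
        unfolding graph_def
      proof
        show "finite VH0" using finite_subset[OF sub finH] .
        show "\<forall>e\<in>EH. \<exists>x y. x \<noteq> y \<and> x \<in> VH0 \<and> y \<in> VH0 \<and> e = {x, y}"
        proof
          fix e assume e: "e \<in> EH"
          then have "e \<in> EH'" unfolding EH_def by blast
          then obtain x y where "x \<noteq> y" "x \<in> VH" "y \<in> VH" "e = {x, y}"
            using gH unfolding graph_def by blast
          then show "\<exists>x y. x \<noteq> y \<and> x \<in> VH0 \<and> y \<in> VH0 \<and> e = {x, y}"
            using e unfolding VH0_def by blast
        qed
      qed
      have niH0: "no_isolated VH0 EH" unfolding no_isolated_def VH0_def by blast
      have gq0: "generic d VH0 q" by (rule generic_sub[OF gq sub])
      have le0: "length_equiv d E p EH q \<psi>" unfolding EH_def by (rule le_restrict[OF le nE])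
      have "fully_reconstructible_fw d V E p" using fr gp
        unfolding fully_reconstructible_def by blast
      then have ind: "induces V E VH0 EH \<psi>"
        unfolding fully_reconstructible_fw_def using gH0 niH0 gq0 le0 by blast
      have fin: "induces V (E \<union> {{u, v}}) VH0 EH' \<psi> \<and> \<psi> {u, v} \<subseteq> VH0"
        using finish[OF assms(1,3,4,5) nE assms(7) gp gq gH le sub ind[unfolded EH_def]] .
      have "VH \<subseteq> VH0"
      proof
        fix x assume x: "x \<in> VH"
        then obtain e where e: "e \<in> EH'" "x \<in> e" using niH unfolding no_isolated_def by blast
        show "x \<in> VH0"
        proof (cases "e = \<psi> {u, v}")
          case True then show ?thesis using fin e by blast
        next
          case False then have "e \<in> EH" unfolding EH_def using e by blast
          then show ?thesis unfolding VH0_def using x e by blast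
        qed
      qed
      then have "VH0 = VH" using sub by blast
      then show "induces V (E \<union> {{u, v}}) VH EH' \<psi>" using fin by simp
    qed
    then show ?thesis using ni' unfolding fully_reconstructible_def by blast
  qed
  show ?thesis using S F by blast
qed

end
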